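(* Let $(\lambda_1,u_1)$ and $(\lambda_2,u_2)$ be two solution pairs of the system $(PAP-\lambda I)u=-b_0$, $\|u\|=\gamma$, $u\in\mathcal N(C^{\top})$, and let $f(u)=u^{\top}PAPu+2u^{\top}b_0$. Then $\lambda_1<\lambda_2$ if and only if $f(u_1)<f(u_2)$.
   Context: Let $A\in\mathbb{R}^{n\times n}$ be symmetric, $C\in\mathbb{R}^{n\times m}$ ($m<n$) full column rank, $b\in\mathbb{R}^m$, $n_0=C(C^{\top}C)^{-1}b$ with $\|n_0\|<1$, $\gamma=\sqrt{1-\|n_0\|^2}$, $P=I-C(C^{\top}C)^{-1}C^{\top}$ (orthogonal projector onto $\mathcal N(C^{\top})$), $b_0=PAn_0$. *)

theory Defs
  imports "HOL-Analysis.Analysis"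
begin

end

theory Submission
  imports Defs
begin


lemma vmul_assoc2: "(x::real^'n) v* (X ** Y) = (x v* X) v* Y"
  by (metis transpose_matrix_vector matrix_transpose_mul matrix_vector_mul_assoc)

lemma vmul_diff: "(x::real^'n) v* (X - Y) = x v* X - x v* Y"
  by (simp add: vector_matrix_mult_def vec_eq_iff sum_subtractf algebra_simps)

lemma vmul_id: "(x::real^'n) v* mat 1 = x"
  by (metis transpose_matrix_vector transpose_mat matrix_vector_mul_lid)

theorem lemma2p1:
  fixes A :: "real^'n^'n" and C :: "real^'m^'n" and b :: "real^'m"
    and n0 b0 :: "real^'n" and P :: "real^'n^'n" and g :: real
    and f :: "real^'n \<Rightarrow> real"
    and l1 l2 :: real and u1 u2 :: "real^'n"
  assumes symA: "transpose A = A"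
    and mn: "CARD('m) < CARD('n)"
    and rankC: "rank C = CARD('m)"
    and n0_def: "n0 = C *v (matrix_inv (transpose C ** C) *v b)"
    and n0_lt: "norm n0 < 1"
    and g_def: "g = sqrt (1 - (norm n0)\<^sup>2)"
    and P_def: "P = mat 1 - C ** matrix_inv (transpose C ** C) ** transpose C"
    and b0_def: "b0 = P *v (A *v n0)"
    and f_def: "f = (\<lambda>u. u \<bullet> ((P ** A ** P) *v u) + 2 * (u \<bullet> b0))"
    and sol1: "(P ** A ** P - l1 *\<^sub>R mat 1) *v u1 = - b0" "norm u1 = g" "transpose C *v u1 = 0"
    and sol2: "(P ** A ** P - l2 *\<^sub>R mat 1) *v u2 = - b0" "norm u2 = g" "transpose C *v u2 = 0"
  shows "l1 < l2 \<longleftrightarrow> f u1 < f u2"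
proof -
  define K where "K = matrix_inv (transpose C ** C)"
  have PD: "P = mat 1 - C ** K ** transpose C" using P_def K_def by simp
  have Pr: "P *v u = u" if "transpose C *v u = 0" for u
    using that by (simp add: PD matrix_vector_mult_diff_rdistrib matrix_vector_mul_assoc[symmetric])
  have Pl: "u v* P = u" if "transpose C *v u = 0" for u
  proof -
    have "u v* C = 0" using that by simp
    then show ?thesis by (simp add: PD vmul_diff vmul_assoc2 vmul_id)
  qed
  have Mx: "v \<bullet> ((P ** A ** P) *v w) = v \<bullet> (A *v w)"
    if "transpose C *v v = 0" "transpose C *v w = 0" for v w
  proof -
    have "v \<bullet> ((P ** A ** P) *v w) = v \<bullet> (P *v (A *v (P *v w)))"
      by (simp add: matrix_vector_mul_assoc matrix_mul_assoc)
    also have "... = (v v* P) \<bullet> (A *v (P *v w))" by (simp add: dot_lmul_matrix)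
    also have "... = v \<bullet> (A *v w)" using that Pl Pr by simp
    finally show ?thesis .
  qed
  have Asym: "v \<bullet> (A *v w) = w \<bullet> (A *v v)" for v w
  proof -
    have "v \<bullet> (A *v w) = (v v* A) \<bullet> w" by (simp add: dot_lmul_matrix)
    also have "v v* A = transpose A *v v" by simp
    finally show ?thesis using symA by (simp add: inner_commute)
  qed
  define M where "M = P ** A ** P"
  have e1: "M *v u1 = l1 *\<^sub>R u1 - b0" using sol1(1) unfolding M_def
    by (simp add: matrix_vector_mult_diff_rdistrib algebra_simps scaleR_matrix_vector_assoc[symmetric])
  have e2: "M *v u2 = l2 *\<^sub>R u2 - b0" using sol2(1) unfolding M_def
    by (simp add: matrix_vector_mult_diff_rdistrib algebra_simps scaleR_matrix_vector_assoc[symmetric])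
  have sym: "u2 \<bullet> (M *v u1) = u1 \<bullet> (M *v u2)"
    unfolding M_def using Mx sol1(3) sol2(3) Asym by metis
  have gpos: "g > 0"
  proof -
    have "(norm n0)^2 < 1" using n0_lt norm_ge_zero
      by (metis abs_norm_cancel abs_square_less_1)
    then show ?thesis using g_def by simp
  qed
  have f1: "f u1 = l1 * g^2 + u1 \<bullet> b0"
    using e1 sol1(2) unfolding f_def M_def[symmetric]
    by (simp add: inner_diff_right power2_norm_eq_inner[symmetric])
  have f2: "f u2 = l2 * g^2 + u2 \<bullet> b0"
    using e2 sol2(2) unfolding f_def M_def[symmetric]
    by (simp add: inner_diff_right power2_norm_eq_inner[symmetric])
  have k: "(l2 - l1) * (u1 \<bullet> u2) = (u1 - u2) \<bullet> b0"
    using sym e1 e2 by (simp add: inner_diff_right inner_diff_left inner_commute algebra_simps)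
  have n12: "(norm (u1 - u2))^2 = 2 * g^2 - 2 * (u1 \<bullet> u2)"
    proof -
    have "u1 \<bullet> u1 = g^2" "u2 \<bullet> u2 = g^2" using sol1(2) sol2(2) by (metis power2_norm_eq_inner)+
    then show ?thesis by (simp add: power2_norm_eq_inner inner_diff_right inner_diff_left inner_commute)
  qed
  have key: "f u2 - f u1 = (l2 - l1) * (norm (u1 - u2))^2 / 2"
    using f1 f2 k unfolding n12 by (simp add: inner_diff_left algebra_simps)
  show ?thesis
  proof (cases "u1 = u2")
    case True
    then have "(l1 - l2) *\<^sub>R u1 = 0" using e1 e2 by (metis diff_self eq_diff_eq scaleR_left_diff_distrib)
    moreover have "u1 \<noteq> 0" using sol1(2) gpos by auto
    ultimately have "l1 = l2" by simp
    then show ?thesis using key True by simp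
  next
    case False
    then have "(norm (u1 - u2))^2 > 0" by simp
    moreover have "f u1 < f u2 \<longleftrightarrow> 0 < (l2 - l1) * (norm (u1 - u2))^2 / 2" using key by linarith
    ultimately show ?thesis by (simp add: zero_less_mult_iff)
  qed
qed

end
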